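(* For every $m\ge 1$, the Zimin word $Z_m$ is minimal for the ai-semiring $\mathcal{B}_2^1$; that is, if $w$ is a word such that $\mathcal{B}_2^1$ satisfies the identity $w+Z_m=Z_m$, then $w=Z_m$.
   Context: Words are finite nonempty sequences of variables from a countably infinite set. Zimin words are defined by $Z_1=x_1$, $Z_{m+1}=Z_m x_{m+1} Z_m$ with distinct variables $x_1,x_2,\dots$. $B_2^1$ is the six-element monoid with zero $\{1,c,d,cd,dc,0\}$ presented as $\langle c,d\mid cdc=c,\ dcd=d,\ c^2=d^2=0\rangle$. $\mathcal{B}_2^1$ is the ai-semiring $(B_2^1,+,\cdot)$ where $+$ is the join for the partial order in which $0$ is the greatest element, $c,d,cd,dc$ are pairwise incomparable and all lie below $0$, $1<cd$, $1<dc$, and there are no other relations (so $c,d,1$ are minimal elements). An identity $p\leqslant p'$ means $p+p'=p'$; an identity holds in an ai-semiring if it holds under every substitution of elements for variables (words evaluated as products). *)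

theory Defs
  imports Main
begin

text \<open>Words: nonempty lists of variables; variable x_i is represented by the natural number i.\<close>
type_synonym word = "nat list"

fun zimin :: "nat \<Rightarrow> word" where
  "zimin 0 = []"
| "zimin (Suc m) = zimin m @ [Suc m] @ zimin m"

datatype B21 = One | C | D | CD | DC | Zero

text \<open>Nonidentity, nonzero elements as matrix units: c = e12, d = e21, cd = e11, dc = e22.\<close>
fun unit_idx :: "B21 \<Rightarrow> nat \<times> nat" where
  "unit_idx C = (1, 2)"
| "unit_idx D = (2, 1)"
| "unit_idx CD = (1, 1)"
| "unit_idx DC = (2, 2)"
| "unit_idx _ = (0, 0)"

fun of_idx :: "nat \<times> nat \<Rightarrow> B21" where
  "of_idx (i, j) =
     (if (i, j) = (1, 2) then C else if (i, j) = (2, 1) then D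
      else if (i, j) = (1, 1) then CD else DC)"

definition bmul :: "B21 \<Rightarrow> B21 \<Rightarrow> B21" where
  "bmul x y =
     (if x = One then y else if y = One then x
      else if x = Zero \<or> y = Zero then Zero
      else if snd (unit_idx x) = fst (unit_idx y)
           then of_idx (fst (unit_idx x), snd (unit_idx y))
           else Zero)"

text \<open>Addition: join for the order with 0 on top, 1 < cd, 1 < dc, and c, d, cd, dc pairwise incomparable.\<close>
definition badd :: "B21 \<Rightarrow> B21 \<Rightarrow> B21" where
  "badd x y =
     (if x = y then x
      else if x = One \<and> (y = CD \<or> y = DC) then y
      else if y = One \<and> (x = CD \<or> x = DC) then x
      else Zero)"

definition beval :: "(nat \<Rightarrow> B21) \<Rightarrow> word \<Rightarrow> B21" where
  "beval \<phi> w = foldr (\<lambda>x acc. bmul (\<phi> x) acc) w One"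

definition B21_sat_le :: "word \<Rightarrow> word \<Rightarrow> bool" where
  "B21_sat_le p q \<longleftrightarrow> (\<forall>\<phi>. badd (beval \<phi> p) (beval \<phi> q) = beval \<phi> q)"

end

theory Submission
  imports Defs
begin

lemma bmul_tab[simp]:
  "bmul One y = y" "bmul x One = x" "bmul Zero y = Zero" "bmul x Zero = Zero"
  "bmul C C = Zero" "bmul C D = CD" "bmul C CD = Zero" "bmul C DC = C"
  "bmul D C = DC" "bmul D D = Zero" "bmul D CD = D" "bmul D DC = Zero"
  "bmul CD C = C" "bmul CD D = Zero" "bmul CD CD = CD" "bmul CD DC = Zero"
  "bmul DC C = Zero" "bmul DC D = D" "bmul DC CD = Zero" "bmul DC DC = DC"
  by (cases x; simp add: bmul_def)+

lemma beval_Nil[simp]: "beval f [] = One" by (simp add: beval_def)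
lemma beval_Cons[simp]: "beval f (x # u) = bmul (f x) (beval f u)" by (simp add: beval_def)

fun alt :: "nat \<Rightarrow> nat list \<Rightarrow> bool" where
  "alt a [] = False"
| "alt a [x] = (x = a)"
| "alt a (x # y # u) = (x = a \<and> y \<noteq> a \<and> alt a u)"

lemma alt_app: "alt a u \<Longrightarrow> alt a v \<Longrightarrow> b \<noteq> a \<Longrightarrow> alt a (u @ b # v)"
  by (induction a u rule: alt.induct) auto

lemma alt_uniq: "alt a u \<Longrightarrow> alt a v \<Longrightarrow> filter (\<lambda>x. x \<noteq> a) u = filter (\<lambda>x. x \<noteq> a) v \<Longrightarrow> u = v"
proof (induction a u arbitrary: v rule: alt.induct)
  case (2 a x)
  then show ?case by (cases "(a, v)" rule: alt.cases) auto
next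
  case (3 a x y u)
  then show ?case by (cases "(a, v)" rule: alt.cases) auto
qed auto

lemma beval_C_One: "beval f u = One \<Longrightarrow> (\<And>x. f x \<noteq> One) \<Longrightarrow> u = []"
proof (cases u)
  case (Cons x u')
  assume "beval f u = One" and h: "\<And>x. f x \<noteq> One"
  thus ?thesis using h[of x] Cons by (cases "f x"; cases "beval f u'") auto
qed simp

definition phi0 :: "nat \<Rightarrow> nat \<Rightarrow> B21" where
  "phi0 a x = (if x = a then C else D)"

lemma alt_beval: "alt a u \<Longrightarrow> beval (phi0 a) u = C"
  by (induction a u rule: alt.induct) (auto simp: phi0_def)

lemma beval_alt: "beval (phi0 a) u = C \<Longrightarrow> alt a u"
proof (induction a u rule: alt.induct)
  case (1 a)
  then show ?case by simp
next
  case (2 a x)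
  then show ?case by (cases "x = a") (auto simp: phi0_def)
next
  case (3 a x y u)
  have nz: "\<And>x. phi0 a x \<noteq> One" by (simp add: phi0_def)
  have pv: "\<And>z. phi0 a z = (if z = a then C else D)" by (simp add: phi0_def)
  define v where "v = beval (phi0 a) u"
  have h0: "bmul (phi0 a x) (bmul (phi0 a y) v) = C" using 3(2) v_def by simp
  have hx: "x = a" and hy: "bmul (phi0 a y) v = DC"
    using h0 pv[of x] pv[of y] by (cases "x = a"; cases "y = a"; cases v; simp)+
  have hy2: "y \<noteq> a" and hu: "beval (phi0 a) u = C"
    using hy pv[of y] v_def by (cases "y = a"; cases v; simp)+
  show ?case using hx hy2 3(1)[OF hu] by simp
qed

lemma beval_del: "beval (f(a := One)) u = beval f (filter (\<lambda>x. x \<noteq> a) u)"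
  by (induction u) auto

lemma zimin_filter: "filter (\<lambda>x. x \<noteq> Suc 0) (zimin (Suc m)) = map Suc (zimin m)"
  by (induction m) auto

lemma zs_filter: "filter (\<lambda>x. x \<noteq> Suc k) (map (\<lambda>i. i + k) (zimin (Suc m)))
   = map (\<lambda>i. i + Suc k) (zimin m)"
proof -
  have "filter (\<lambda>x. x \<noteq> Suc k) (map (\<lambda>i. i + k) (zimin (Suc m)))
     = map (\<lambda>i. i + k) (filter (\<lambda>x. x \<noteq> Suc 0) (zimin (Suc m)))"
    by (simp add: filter_map comp_def del: zimin.simps)
  also have "\<dots> = map (\<lambda>i. i + Suc k) (zimin m)" by (simp add: zimin_filter del: zimin.simps)
  finally show ?thesis .
qed

lemma zs_alt: "alt (Suc k) (map (\<lambda>i. i + k) (zimin (Suc m)))"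
proof (induction m)
  case (Suc m)
  have e: "zimin (Suc (Suc m)) = zimin (Suc m) @ Suc (Suc m) # zimin (Suc m)" by simp
  show ?case unfolding e using Suc by (simp del: zimin.simps add: alt_app)
qed simp

lemma badd_C: "badd y C = C \<Longrightarrow> y = C"
  by (cases y) (auto simp: badd_def)

lemma badd_One: "badd y One = One \<Longrightarrow> y = One"
  by (cases y) (auto simp: badd_def)

lemma main: "B21_sat_le w (map (\<lambda>i. i + k) (zimin m)) \<Longrightarrow> w = map (\<lambda>i. i + k) (zimin m)"
proof (induction m arbitrary: k w)
  case 0
  from 0 have "badd (beval (\<lambda>_. C) w) One = One" by (simp add: B21_sat_le_def)
  hence "beval (\<lambda>_. C) w = One" by (rule badd_One)
  hence "w = []" by (rule beval_C_One) simp
  then show ?case by simp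
next
  case (Suc m)
  define z where "z = map (\<lambda>i. i + k) (zimin (Suc m))"
  have sat: "B21_sat_le w z" using Suc.prems z_def by simp
  have "B21_sat_le (filter (\<lambda>x. x \<noteq> Suc k) w) (map (\<lambda>i. i + Suc k) (zimin m))"
    unfolding B21_sat_le_def
  proof
    fix f
    from sat have "badd (beval (f(Suc k := One)) w) (beval (f(Suc k := One)) z) = beval (f(Suc k := One)) z"
      by (simp add: B21_sat_le_def)
    thus "badd (beval f (filter (\<lambda>x. x \<noteq> Suc k) w)) (beval f (map (\<lambda>i. i + Suc k) (zimin m))) =
          beval f (map (\<lambda>i. i + Suc k) (zimin m))"
      by (simp add: beval_del z_def zs_filter del: zimin.simps)
  qed
  hence f1: "filter (\<lambda>x. x \<noteq> Suc k) w = filter (\<lambda>x. x \<noteq> Suc k) z"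
    using Suc.IH[of _ "Suc k"] z_def zs_filter by (simp del: zimin.simps)
  have az: "alt (Suc k) z" using z_def zs_alt by simp
  from sat have "badd (beval (phi0 (Suc k)) w) (beval (phi0 (Suc k)) z) = beval (phi0 (Suc k)) z"
    by (simp add: B21_sat_le_def)
  hence "badd (beval (phi0 (Suc k)) w) C = C" using alt_beval[OF az] by simp
  hence "beval (phi0 (Suc k)) w = C" by (rule badd_C)
  hence aw: "alt (Suc k) w" by (rule beval_alt)
  show ?case using alt_uniq[OF aw az f1] z_def by simp
qed

theorem lemma3p7:
  fixes m :: nat and w :: word
  assumes "m \<ge> 1" and "w \<noteq> []" and "B21_sat_le w (zimin m)"
  shows "w = zimin m"
  using main[of w 0 m] assms(3) by simp

end
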